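(* Let $X$ be a bounded degree simplicial complex (with its natural metric) of finite Assouad–Nagata dimension. Then for every $q\geq 1$, ${}_s\mathrm{TO}^q_X(r) \lesssim \frac{r}{\ln(1+r)}$.
   Context: A simplicial complex is the topological realisation $\{f:S\to[0,1]:\mathrm{supp}(f)\in\mathcal S,\sum_sf(s)=1\}$ of an abstract simplicial complex $(S,\mathcal S)$; bounded degree means $S$ countable and $\max_s|\{t\ne s:\{s,t\}\in\mathcal S\}|<\infty$. Its natural metric is $d(f,f')=\inf\{\sum_{i}\|f_{i-1}-f_i\|_2: f_0=f,f_k=f',\mathrm{supp}(f_{i-1})\cup\mathrm{supp}(f_i)\in\mathcal S\}$. $|Z|$ is the number of $0$-simplices; closed simplices are sets of points whose support lies in a fixed element of $\mathcal S$; $Z\le X$ means an injection of $0$-simplices sending simplices to simplices. For finite $Z$ and continuous $f:Z\to\mathbb R^q$, ${}_s\mathrm{Ov}(f)=\max_z|\{\sigma\text{ closed simplex}: z\in f(\sigma)\}|$, ${}_s\mathrm{TO}^q(Z)=\min_f{}_s\mathrm{Ov}(f)$, ${}_s\mathrm{TO}^q_X(r)=\max\{{}_s\mathrm{TO}^q(Z):Z\le X,|Z|\le r\}$. $f\lesssim g$ means there is $C$ with $f(r)\le Cg(Cr)+C$ for all $r$. *)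

theory Defs
  imports "HOL-Analysis.Analysis"
begin

definition abs_simplicial_complex :: "'a set \<Rightarrow> 'a set set \<Rightarrow> bool" where
  "abs_simplicial_complex V K \<longleftrightarrow>
     (\<forall>\<sigma>\<in>K. finite \<sigma> \<and> \<sigma> \<noteq> {} \<and> \<sigma> \<subseteq> V) \<and>
     (\<forall>\<sigma>\<in>K. \<forall>\<tau>. \<tau> \<subseteq> \<sigma> \<and> \<tau> \<noteq> {} \<longrightarrow> \<tau> \<in> K) \<and>
     (\<forall>v\<in>V. {v} \<in> K)"

definition bounded_degree :: "'a set \<Rightarrow> 'a set set \<Rightarrow> bool" where
  "bounded_degree V K \<longleftrightarrow> countable V \<and>
     (\<exists>D::nat. \<forall>s\<in>V. finite {t. t \<noteq> s \<and> {s, t} \<in> K} \<and> card {t. t \<noteq> s \<and> {s, t} \<in> K} \<le> D)"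

definition supp :: "('a \<Rightarrow> real) \<Rightarrow> 'a set" where
  "supp f = {s. f s \<noteq> 0}"

definition realisation :: "'a set \<Rightarrow> 'a set set \<Rightarrow> ('a \<Rightarrow> real) set" where
  "realisation V K = {f. (\<forall>s. 0 \<le> f s \<and> f s \<le> 1) \<and> supp f \<in> K \<and> (\<Sum>s\<in>supp f. f s) = 1}"

definition l2dist :: "('a \<Rightarrow> real) \<Rightarrow> ('a \<Rightarrow> real) \<Rightarrow> real" where
  "l2dist f g = sqrt (\<Sum>s\<in>supp f \<union> supp g. (f s - g s)^2)"

text \<open>Natural (path) metric; infimum over admissible chains, \<infinity> if there is none.\<close>
definition nat_metric :: "'a set \<Rightarrow> 'a set set \<Rightarrow> ('a \<Rightarrow> real) \<Rightarrow> ('a \<Rightarrow> real) \<Rightarrow> ereal" where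
  "nat_metric V K f g = Inf {ereal (\<Sum>i<k. l2dist (fs i) (fs (Suc i))) | fs k.
       fs 0 = f \<and> fs k = g \<and> (\<forall>i\<le>k. fs i \<in> realisation V K) \<and>
       (\<forall>i<k. supp (fs i) \<union> supp (fs (Suc i)) \<in> K)}"

definition finite_AN_dim :: "'p set \<Rightarrow> ('p \<Rightarrow> 'p \<Rightarrow> ereal) \<Rightarrow> bool" where
  "finite_AN_dim P d \<longleftrightarrow> (\<exists>n::nat. \<exists>c::real. c > 0 \<and> (\<forall>s::real. s > 0 \<longrightarrow>
     (\<exists>\<U>. \<Union>\<U> = P \<and>
        (\<forall>U\<in>\<U>. \<forall>x\<in>U. \<forall>y\<in>U. d x y \<le> ereal (c * s)) \<and>
        (\<forall>x\<in>P. finite {U\<in>\<U>. \<exists>y\<in>U. d x y < ereal s} \<and>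
                 card {U\<in>\<U>. \<exists>y\<in>U. d x y < ereal s} \<le> n + 1))))"

definition closed_simplex :: "'a set \<Rightarrow> 'a set set \<Rightarrow> 'a set \<Rightarrow> ('a \<Rightarrow> real) set" where
  "closed_simplex V K \<sigma> = {x \<in> realisation V K. supp x \<subseteq> \<sigma>}"

definition s_Ov :: "'a set \<Rightarrow> 'a set set \<Rightarrow> (('a \<Rightarrow> real) \<Rightarrow> real ^ 'q::finite) \<Rightarrow> nat" where
  "s_Ov W Z f = Max ((\<lambda>z. card {\<sigma>\<in>Z. z \<in> f ` closed_simplex W Z \<sigma>}) ` UNIV)"

text \<open>For finite Z the
  realisation lies in the finite-dimensional space of functions supported in W, where the
  product topology agrees with the topology of the natural metric.\<close>
definition s_TO :: "'q::finite itself \<Rightarrow> 'a set \<Rightarrow> 'a set set \<Rightarrow> nat" where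
  "s_TO _ W Z = Inf {s_Ov W Z f | f :: ('a \<Rightarrow> real) \<Rightarrow> real ^ 'q.
                       continuous_on (realisation W Z) f}"

definition subcomplex_le :: "'b set \<Rightarrow> 'b set set \<Rightarrow> 'a set \<Rightarrow> 'a set set \<Rightarrow> bool" where
  "subcomplex_le W Z V K \<longleftrightarrow> abs_simplicial_complex W Z \<and>
     (\<exists>\<phi>. inj_on \<phi> W \<and> \<phi> ` W \<subseteq> V \<and> (\<forall>\<sigma>\<in>Z. \<phi> ` \<sigma> \<in> K))"

text \<open>sTO^q_X(r): maximum over finite Z \<le> X with at most r vertices
  (Z is taken with vertices in the same type as X, no loss since Z injects into X).\<close>
definition s_TO_X :: "'q::finite itself \<Rightarrow> 'a set \<Rightarrow> 'a set set \<Rightarrow> nat \<Rightarrow> nat" where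
  "s_TO_X q V K r = Sup {s_TO q W Z | (W::'a set) Z. finite W \<and> card W \<le> r \<and> subcomplex_le W Z V K}"

end

theory Submission
  imports Defs
begin

definition vtx :: "'a \<Rightarrow> 'a \<Rightarrow> real" where
  "vtx a = (\<lambda>s. if s = a then 1 else 0)"

lemma supp_vtx[simp]: "supp (vtx a) = {a}"
  by (auto simp: supp_def vtx_def)

inductive reach :: "'a set \<Rightarrow> 'a set set \<Rightarrow> nat \<Rightarrow> 'a \<Rightarrow> 'a \<Rightarrow> bool" for V K where
  r0: "u \<in> V \<Longrightarrow> reach V K 0 u u"
| rS: "reach V K m u w \<Longrightarrow> {w, v} \<in> K \<Longrightarrow> reach V K (Suc m) u v"

context
  fixes V :: "'a set" and K :: "'a set set"
  assumes asc: "abs_simplicial_complex V K"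
begin

lemma asc_all: "(\<forall>\<sigma>\<in>K. finite \<sigma> \<and> \<sigma> \<noteq> {} \<and> \<sigma> \<subseteq> V) \<and>
  (\<forall>\<sigma>\<in>K. \<forall>\<tau>. \<tau> \<subseteq> \<sigma> \<and> \<tau> \<noteq> {} \<longrightarrow> \<tau> \<in> K) \<and> (\<forall>v\<in>V. {v} \<in> K)"
  by (rule asc[unfolded abs_simplicial_complex_def])

lemmas asc_parts = conjunct1[OF asc_all] conjunct1[OF conjunct2[OF asc_all]] conjunct2[OF conjunct2[OF asc_all]]

lemma K_fin: "\<sigma> \<in> K \<Longrightarrow> finite \<sigma> \<and> \<sigma> \<noteq> {} \<and> \<sigma> \<subseteq> V"
  using asc_parts(1) by simp

lemma edge_V: "{a, b} \<in> K \<Longrightarrow> a \<in> V \<and> b \<in> V"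
  using K_fin[of "{a,b}"] by simp

lemma single_K: "a \<in> V \<Longrightarrow> {a} \<in> K"
  using asc_parts(3) by simp

lemma sub_K: "\<sigma> \<in> K \<Longrightarrow> \<tau> \<subseteq> \<sigma> \<Longrightarrow> \<tau> \<noteq> {} \<Longrightarrow> \<tau> \<in> K"
  using asc_parts(2) by blast

lemma reach_V: "reach V K m u v \<Longrightarrow> u \<in> V \<and> v \<in> V"
proof (induction rule: reach.induct)
  case (r0 u) then show ?case by simp
next
  case (rS m u w v) then show ?case using edge_V[of w v] by simp
qed

lemma reach_Suc: "reach V K m u v \<Longrightarrow> reach V K (Suc m) u v"
proof -
  assume h: "reach V K m u v"
  have "{v, v} \<in> K" using reach_V[OF h] single_K[of v] by simp
  then show ?thesis using reach.rS[OF h] by blast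
qed

lemma reach_mono: "reach V K m u v \<Longrightarrow> m \<le> m' \<Longrightarrow> reach V K m' u v"
proof (induction m' )
  case 0 then show ?case by simp
next
  case (Suc m')
  show ?case
  proof (cases "m = Suc m'")
    case True then show ?thesis using Suc.prems(1) by simp
  next
    case False
    then have "m \<le> m'" using Suc.prems(2) by simp
    then have "reach V K m' u v" using Suc.IH Suc.prems(1) by simp
    then show ?thesis by (rule reach_Suc)
  qed
qed

lemma reach_prepend: "reach V K m w v \<Longrightarrow> {u, w} \<in> K \<Longrightarrow> reach V K (Suc m) u v"
proof (induction rule: reach.induct)
  case (r0 x)
  have "reach V K 0 u u" using edge_V[of u x] r0 by (simp add: reach.r0)
  then show ?case using reach.rS[of V K 0 u u x] r0 by simp
next
  case (rS m x y z)
  have "reach V K (Suc m) u y" using rS.IH rS.prems .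
  then show ?case using reach.rS[of V K "Suc m" u y z] rS.hyps(2) by simp
qed

lemma reach_sym: "reach V K m u v \<Longrightarrow> reach V K m v u"
proof (induction rule: reach.induct)
  case (r0 x) then show ?case by (simp add: reach.r0)
next
  case (rS m x y z)
  then show ?case using reach_prepend[of m y x z] by (simp add: insert_commute)
qed

lemma reach_trans: "reach V K m' w v \<Longrightarrow> reach V K m u w \<Longrightarrow> reach V K (m + m') u v"
proof (induction rule: reach.induct)
  case (r0 x) then show ?case by simp
next
  case (rS m1 x y z)
  have "reach V K (m + m1) u y" using rS.IH rS.prems .
  then show ?case using reach.rS[of V K "m + m1" u y z] rS.hyps(2) by simp
qed

lemma reach_path: "reach V K m u v \<Longrightarrow> \<exists>p. p 0 = u \<and> p m = v \<and> (\<forall>i\<le>m. p i \<in> V) \<and> (\<forall>i<m. {p i, p (Suc i)} \<in> K)"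
proof (induction rule: reach.induct)
  case (r0 x) then show ?case by (intro exI[of _ "\<lambda>_. x"]) simp
next
  case (rS m x y z)
  then obtain p where p: "p 0 = x" "p m = y" "\<forall>i\<le>m. p i \<in> V" "\<forall>i<m. {p i, p (Suc i)} \<in> K" by blast
  define q where "q = p(Suc m := z)"
  have h1: "q 0 = x" using p(1) by (simp add: q_def)
  have h2: "q (Suc m) = z" by (simp add: q_def)
  have h3: "\<forall>i\<le>Suc m. q i \<in> V"
  proof (intro allI impI)
    fix i assume "i \<le> Suc m"
    then consider "i = Suc m" | "i \<le> m" by linarith
    then show "q i \<in> V"
    proof cases
      case 1 then show ?thesis using edge_V[OF rS(2)] by (simp add: q_def)
    next
      case 2 then show ?thesis using p(3) by (simp add: q_def)
    qed
  qed
  have h4: "\<forall>i<Suc m. {q i, q (Suc i)} \<in> K"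
  proof (intro allI impI)
    fix i assume "i < Suc m"
    then consider "i = m" | "i < m" by linarith
    then show "{q i, q (Suc i)} \<in> K"
    proof cases
      case 1 then show ?thesis using rS(2) p(2) by (simp add: q_def)
    next
      case 2
      then have "q i = p i" "q (Suc i) = p (Suc i)" by (simp_all add: q_def)
      then show ?thesis using p(4) 2 by metis
    qed
  qed
  show ?case
    apply (rule exI[of _ q])
    apply (intro conjI)
       apply (rule h1)
      apply (rule h2)
     apply (rule h3)
    apply (rule h4)
    done
qed

lemma vtx_real: "a \<in> V \<Longrightarrow> vtx a \<in> realisation V K"
proof -
  assume a: "a \<in> V"
  have "\<forall>s. 0 \<le> vtx a s \<and> vtx a s \<le> 1" by (simp add: vtx_def)
  moreover have "(\<Sum>s\<in>supp (vtx a). vtx a s) = 1" by (simp only: supp_vtx) (simp add: vtx_def)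
  ultimately show ?thesis using single_K[OF a] by (simp add: realisation_def)
qed

lemma l2dist_vtx: "l2dist (vtx a) (vtx b) \<le> sqrt 2"
proof (cases "a = b")
  case True then show ?thesis by (simp add: l2dist_def)
next
  case False then show ?thesis by (simp only: l2dist_def supp_vtx) (simp add: vtx_def)
qed

lemma reach_metric: "reach V K m u v \<Longrightarrow> nat_metric V K (vtx u) (vtx v) \<le> ereal (real m * sqrt 2)"
proof -
  assume "reach V K m u v"
  then obtain p where p: "p 0 = u" "p m = v" "\<forall>i\<le>m. p i \<in> V" "\<forall>i<m. {p i, p (Suc i)} \<in> K"
    using reach_path by blast
  define fs where "fs = (\<lambda>i. vtx (p i))"
  have c1: "fs 0 = vtx u" "fs m = vtx v" by (simp_all add: fs_def p)
  have c2: "\<forall>i\<le>m. fs i \<in> realisation V K" using p(3) vtx_real by (simp add: fs_def)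
  have c3: "\<forall>i<m. supp (fs i) \<union> supp (fs (Suc i)) \<in> K" using p(4) by (simp add: fs_def insert_commute)
  have mem: "ereal (\<Sum>i<m. l2dist (fs i) (fs (Suc i))) \<in> {ereal (\<Sum>i<k. l2dist (fs i) (fs (Suc i))) | fs k.
       fs 0 = vtx u \<and> fs k = vtx v \<and> (\<forall>i\<le>k. fs i \<in> realisation V K) \<and>
       (\<forall>i<k. supp (fs i) \<union> supp (fs (Suc i)) \<in> K)}"
    unfolding mem_Collect_eq
    apply (rule exI[of _ fs])
    apply (rule exI[of _ m])
    apply (intro conjI refl c1 c2 c3)
    done
  have "(\<Sum>i<m. l2dist (fs i) (fs (Suc i))) \<le> (\<Sum>i<m. sqrt 2)"
    by (rule sum_mono) (simp add: fs_def l2dist_vtx)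
  then have le1: "ereal (\<Sum>i<m. l2dist (fs i) (fs (Suc i))) \<le> ereal (real m * sqrt 2)" by simp
  have le2: "nat_metric V K (vtx u) (vtx v) \<le> ereal (\<Sum>i<m. l2dist (fs i) (fs (Suc i)))"
    unfolding nat_metric_def by (rule Inf_lower[OF mem])
  show ?thesis by (rule order_trans[OF le2 le1])
qed

end


definition nbr :: "'a set set \<Rightarrow> 'a \<Rightarrow> 'a set" where
  "nbr K s = {t. t \<noteq> s \<and> {s, t} \<in> K}"

lemma l2dist_nonneg: "0 \<le> l2dist f g"
  by (simp add: l2dist_def sum_nonneg)

lemma l2dist_coord:
  assumes fin: "finite (supp f \<union> supp g)"
  shows "\<bar>f w - g w\<bar> \<le> l2dist f g"
proof (cases "w \<in> supp f \<union> supp g")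
  case True
  have "(f w - g w)^2 \<le> (\<Sum>s\<in>supp f \<union> supp g. (f s - g s)^2)"
    by (rule member_le_sum[OF True _ fin]) simp
  then have "sqrt ((f w - g w)^2) \<le> l2dist f g" unfolding l2dist_def by (rule real_sqrt_le_mono)
  then show ?thesis by simp
next
  case False
  then have "f w = 0" "g w = 0" by (auto simp: supp_def)
  then show ?thesis using l2dist_nonneg by simp
qed

context
  fixes V :: "'a set" and K :: "'a set set" and D :: nat
  assumes asc: "abs_simplicial_complex V K"
    and deg: "\<forall>s\<in>V. finite (nbr K s) \<and> card (nbr K s) \<le> D"
begin

lemma simplex_card: "\<sigma> \<in> K \<Longrightarrow> card \<sigma> \<le> D + 1"
proof -
  assume s: "\<sigma> \<in> K"
  then have fin: "finite \<sigma>" and ne: "\<sigma> \<noteq> {}" and sub: "\<sigma> \<subseteq> V" using K_fin[OF asc] by blast+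
  then obtain a where a: "a \<in> \<sigma>" by blast
  have "\<sigma> \<subseteq> insert a (nbr K a)"
  proof
    fix t assume t: "t \<in> \<sigma>"
    show "t \<in> insert a (nbr K a)"
    proof (cases "t = a")
      case False
      have "{a, t} \<subseteq> \<sigma>" using a t by simp
      then have "{a, t} \<in> K" using sub_K[OF asc s] by blast
      then show ?thesis using False by (simp add: nbr_def)
    qed simp
  qed
  moreover have "finite (nbr K a)" "card (nbr K a) \<le> D" using deg a sub by blast+
  ultimately have "card \<sigma> \<le> card (insert a (nbr K a))" by (intro card_mono) simp_all
  also have "\<dots> \<le> card (nbr K a) + 1" by (simp add: card_insert_le_m1 card_insert_if)
  finally show ?thesis using \<open>card (nbr K a) \<le> D\<close> by linarith
qed

lemma heavy:
  assumes f: "f \<in> realisation V K"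
  shows "\<exists>w. f w \<ge> 1 / (real D + 1)"
proof (rule ccontr)
  assume "\<not> ?thesis"
  then have lt: "\<And>w. f w < 1 / (real D + 1)" by (simp add: not_le)
  have sK: "supp f \<in> K" and sum1: "(\<Sum>s\<in>supp f. f s) = 1" using f by (auto simp: realisation_def)
  then have fin: "finite (supp f)" and ne: "supp f \<noteq> {}" using K_fin[OF asc] by blast+
  have "(\<Sum>s\<in>supp f. f s) < (\<Sum>s\<in>supp f. 1 / (real D + 1))"
    by (rule sum_strict_mono[OF fin ne]) (use lt in blast)
  also have "\<dots> = real (card (supp f)) / (real D + 1)" by simp
  also have "\<dots> \<le> 1" using simplex_card[OF sK] by (simp add: divide_simps)
  finally show False using sum1 by simp
qed

lemma real_fin: "f \<in> realisation V K \<Longrightarrow> finite (supp f)"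
  using K_fin[OF asc] by (auto simp: realisation_def)

lemma telescope:
  assumes R: "\<forall>i\<le>k. fs i \<in> realisation V K"
  shows "i \<le> j \<Longrightarrow> j \<le> k \<Longrightarrow> \<bar>fs i w - fs j w\<bar> \<le> (\<Sum>l\<in>{i..<j}. l2dist (fs l) (fs (Suc l)))"
proof (induction j)
  case 0 then show ?case by simp
next
  case (Suc j)
  show ?case
  proof (cases "i = Suc j")
    case True then show ?thesis by simp
  next
    case False
    then have ij: "i \<le> j" using Suc.prems by simp
    have IH: "\<bar>fs i w - fs j w\<bar> \<le> (\<Sum>l\<in>{i..<j}. l2dist (fs l) (fs (Suc l)))"
      using Suc.IH ij Suc.prems by simp
    have "finite (supp (fs j) \<union> supp (fs (Suc j)))"
      using R Suc.prems real_fin by simp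
    then have st: "\<bar>fs j w - fs (Suc j) w\<bar> \<le> l2dist (fs j) (fs (Suc j))" by (rule l2dist_coord)
    have "\<bar>fs i w - fs (Suc j) w\<bar> \<le> \<bar>fs i w - fs j w\<bar> + \<bar>fs j w - fs (Suc j) w\<bar>" by linarith
    also have "\<dots> \<le> (\<Sum>l\<in>{i..<j}. l2dist (fs l) (fs (Suc l))) + l2dist (fs j) (fs (Suc j))"
      using IH st by linarith
    also have "\<dots> = (\<Sum>l\<in>{i..<Suc j}. l2dist (fs l) (fs (Suc l)))" using ij by simp
    finally show ?thesis .
  qed
qed

end


context
  fixes V :: "'a set" and K :: "'a set set" and D :: nat
  assumes asc: "abs_simplicial_complex V K"
    and deg: "\<forall>s\<in>V. finite (nbr K s) \<and> card (nbr K s) \<le> D"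
begin

lemma chain_reach:
  assumes R: "\<forall>i\<le>k. fs i \<in> realisation V K"
    and E: "\<forall>i<k. supp (fs i) \<union> supp (fs (Suc i)) \<in> K"
    and last: "fs k = vtx v"
  shows "i \<le> k \<Longrightarrow> fs i w \<ge> 1 / (real D + 1) \<Longrightarrow>
     \<exists>m. reach V K m w v \<and> real m \<le> 2 * (real D + 1) * (\<Sum>l\<in>{i..<k}. l2dist (fs l) (fs (Suc l))) + 1"
proof (induction "k - i" arbitrary: i w rule: less_induct)
  case less
  define \<alpha> where "\<alpha> = 1 / (real D + 1)"
  have \<alpha>pos: "\<alpha> > 0" by (simp add: \<alpha>_def)
  have wi: "fs i w \<ge> \<alpha>" using less.prems \<alpha>_def by simp
  define L where "L = (\<lambda>i. (\<Sum>l\<in>{i..<k}. l2dist (fs l) (fs (Suc l))))"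
  have Lnn: "\<And>j. L j \<ge> 0" unfolding L_def by (intro sum_nonneg) (simp add: l2dist_nonneg)
  have vV: "v \<in> V" using R last K_fin[OF asc, of "{v}"] by (auto simp: realisation_def)
  show ?case
  proof (cases "\<exists>j. i < j \<and> j \<le> k \<and> fs j w \<le> \<alpha> / 2")
    case False
    have "fs k w > 0"
    proof (cases "i = k")
      case True then show ?thesis using wi \<alpha>pos by simp
    next
      case F: False
      then have "i < k" using less.prems by simp
      then have "\<not> fs k w \<le> \<alpha> / 2" using False less.prems by blast
      then show ?thesis using \<alpha>pos by linarith
    qed
    then have "w = v" using last by (simp add: vtx_def split: if_splits)
    then have "reach V K 0 w v" using vV by (simp add: reach.r0)
    moreover have "real 0 \<le> 2 * (real D + 1) * L i + 1" using Lnn[of i] by simp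
    ultimately show ?thesis unfolding L_def by blast
  next
    case True
    define j where "j = (LEAST j. i < j \<and> j \<le> k \<and> fs j w \<le> \<alpha> / 2)"
    have j: "i < j" "j \<le> k" "fs j w \<le> \<alpha> / 2"
      using LeastI_ex[OF True] unfolding j_def by blast+
    have before: "\<And>l. i \<le> l \<Longrightarrow> l < j \<Longrightarrow> fs l w > \<alpha> / 2"
    proof -
      fix l assume l: "i \<le> l" "l < j"
      show "fs l w > \<alpha> / 2"
      proof (cases "l = i")
        case True then show ?thesis using wi \<alpha>pos by simp
      next
        case False
        then have "\<not> (i < l \<and> l \<le> k \<and> fs l w \<le> \<alpha> / 2)"
          using not_less_Least[of l "\<lambda>j. i < j \<and> j \<le> k \<and> fs j w \<le> \<alpha> / 2"] l unfolding j_def by blast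
        then show ?thesis using l False j by auto
      qed
    qed
    obtain w' where w': "fs j w' \<ge> 1 / (real D + 1)" using heavy[OF asc deg, of "fs j"] R j by blast
    have IH: "\<exists>m. reach V K m w' v \<and> real m \<le> 2 * (real D + 1) * L j + 1"
      using less.hyps[of j w'] j w' less.prems unfolding L_def by simp
    then obtain m where m: "reach V K m w' v" "real m \<le> 2 * (real D + 1) * L j + 1" by blast
    have jm1: "i \<le> j - 1" "j - 1 < j" "Suc (j - 1) = j" using j by auto
    have "fs (j - 1) w > 0" using before[OF jm1(1,2)] \<alpha>pos by simp
    then have w_in: "w \<in> supp (fs (j - 1))" by (simp add: supp_def)
    have "1 / (real D + 1) > 0" by simp
    then have "fs j w' > 0" using w' by linarith
    then have w'_in: "w' \<in> supp (fs j)" by (simp add: supp_def)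
    have "j - 1 < k" using j by simp
    then have "supp (fs (j - 1)) \<union> supp (fs (Suc (j - 1))) \<in> K" using E by blast
    then have UK: "supp (fs (j - 1)) \<union> supp (fs j) \<in> K" using jm1(3) by simp
    have "{w, w'} \<subseteq> supp (fs (j - 1)) \<union> supp (fs j)" using w_in w'_in by blast
    then have "{w, w'} \<in> K" using sub_K[OF asc UK] by blast
    then have reach1: "reach V K (Suc m) w v" using reach_prepend[OF asc m(1)] by simp
    have "\<bar>fs i w - fs j w\<bar> \<le> (\<Sum>l\<in>{i..<j}. l2dist (fs l) (fs (Suc l)))"
      using telescope[OF asc deg R, of i j w] j by simp
    then have half: "(\<Sum>l\<in>{i..<j}. l2dist (fs l) (fs (Suc l))) \<ge> \<alpha> / 2" using wi j by linarith
    have split: "L i = (\<Sum>l\<in>{i..<j}. l2dist (fs l) (fs (Suc l))) + L j"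
      unfolding L_def using sum.atLeastLessThan_concat[of i j k "\<lambda>l. l2dist (fs l) (fs (Suc l))"] j by simp
    have "2 * (real D + 1) * (\<alpha> / 2) = 1" by (simp add: \<alpha>_def)
    then have "2 * (real D + 1) * (\<Sum>l\<in>{i..<j}. l2dist (fs l) (fs (Suc l))) \<ge> 1"
      using mult_left_mono[OF half, of "2 * (real D + 1)"] by simp
    then have "real (Suc m) \<le> 2 * (real D + 1) * L i + 1" using m(2) split by (simp add: algebra_simps)
    then show ?thesis using reach1 unfolding L_def by blast
  qed
qed

lemma metric_reach:
  assumes u: "u \<in> V" and le: "nat_metric V K (vtx u) (vtx v) \<le> ereal L"
  shows "\<exists>m. reach V K m u v \<and> real m \<le> 2 * (real D + 1) * (L + 1) + 1"
proof -
  have "nat_metric V K (vtx u) (vtx v) < ereal (L + 1)" using le by (rule le_less_trans) simp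
  then obtain y where y: "y \<in> {ereal (\<Sum>i<k. l2dist (fs i) (fs (Suc i))) | fs k.
       fs 0 = vtx u \<and> fs k = vtx v \<and> (\<forall>i\<le>k. fs i \<in> realisation V K) \<and>
       (\<forall>i<k. supp (fs i) \<union> supp (fs (Suc i)) \<in> K)}" "y < ereal (L + 1)"
    unfolding nat_metric_def by (auto simp: Inf_less_iff)
  then obtain fs k where fs: "y = ereal (\<Sum>i<k. l2dist (fs i) (fs (Suc i)))" "fs 0 = vtx u" "fs k = vtx v"
    "\<forall>i\<le>k. fs i \<in> realisation V K" "\<forall>i<k. supp (fs i) \<union> supp (fs (Suc i)) \<in> K" by blast
  have sumlt: "(\<Sum>i<k. l2dist (fs i) (fs (Suc i))) < L + 1" using y(2) fs(1) by simp
  have "fs 0 u \<ge> 1 / (real D + 1)" using fs(2) by (simp add: vtx_def)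
  then obtain m where m: "reach V K m u v" "real m \<le> 2 * (real D + 1) * (\<Sum>l\<in>{0..<k}. l2dist (fs l) (fs (Suc l))) + 1"
    using chain_reach[OF fs(4) fs(5) fs(3), of 0 u] by auto
  have "(\<Sum>l\<in>{0..<k}. l2dist (fs l) (fs (Suc l))) = (\<Sum>i<k. l2dist (fs i) (fs (Suc i)))"
    by (simp add: atLeast0LessThan)
  then have "2 * (real D + 1) * (\<Sum>l\<in>{0..<k}. l2dist (fs l) (fs (Suc l))) \<le> 2 * (real D + 1) * (L + 1)"
    using sumlt by (intro mult_left_mono) simp_all
  then have "real m \<le> 2 * (real D + 1) * (L + 1) + 1" using m(2) by linarith
  then show ?thesis using m(1) by blast
qed

lemma ball_card: "finite {v. reach V K m x v} \<and> card {v. reach V K m x v} \<le> (D + 1) ^ m"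
proof (induction m)
  case 0
  have "{v. reach V K 0 x v} \<subseteq> {x}"
  proof
    fix v assume "v \<in> {v. reach V K 0 x v}"
    then have "reach V K 0 x v" by simp
    then show "v \<in> {x}" by (cases rule: reach.cases) simp_all
  qed
  then show ?case using card_mono[of "{x}"] by (auto intro: finite_subset)
next
  case (Suc m)
  let ?B = "{v. reach V K m x v}"
  have sub: "{v. reach V K (Suc m) x v} \<subseteq> (\<Union>y\<in>?B. insert y (nbr K y))"
  proof
    fix v assume "v \<in> {v. reach V K (Suc m) x v}"
    then have "reach V K (Suc m) x v" by simp
    then obtain w where w: "reach V K m x w" "{w, v} \<in> K" by (cases rule: reach.cases) simp_all
    have "v \<in> insert w (nbr K w)" using w(2) unfolding nbr_def by blast
    then show "v \<in> (\<Union>y\<in>?B. insert y (nbr K y))" using w(1) by blast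
  qed
  have fin_each: "\<And>y. y \<in> ?B \<Longrightarrow> finite (insert y (nbr K y)) \<and> card (insert y (nbr K y)) \<le> D + 1"
  proof -
    fix y assume "y \<in> ?B"
    then have "y \<in> V" using reach_V[OF asc] by blast
    then have "finite (nbr K y)" "card (nbr K y) \<le> D" using deg by blast+
    then show "finite (insert y (nbr K y)) \<and> card (insert y (nbr K y)) \<le> D + 1"
      by (simp add: card_insert_if)
  qed
  have finU: "finite (\<Union>y\<in>?B. insert y (nbr K y))"
    by (rule finite_UN_I) (use Suc.IH fin_each in auto)
  have "card {v. reach V K (Suc m) x v} \<le> card (\<Union>y\<in>?B. insert y (nbr K y))"
    by (rule card_mono[OF finU sub])
  also have "\<dots> \<le> (\<Sum>y\<in>?B. card (insert y (nbr K y)))" by (rule card_UN_le) (use Suc.IH in blast)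
  also have "\<dots> \<le> (\<Sum>y\<in>?B. D + 1)" by (rule sum_mono) (use fin_each in blast)
  also have "\<dots> = card ?B * (D + 1)" by simp
  also have "\<dots> \<le> (D + 1) ^ m * (D + 1)" using Suc.IH by (intro mult_right_mono) simp_all
  finally show ?case using finite_subset[OF sub finU] by (simp add: mult.commute)
qed

end


lemma s_TO_le: "continuous_on (realisation W Z) f \<Longrightarrow> s_TO TYPE('q::finite) W Z \<le> s_Ov W Z (f :: ('a \<Rightarrow> real) \<Rightarrow> real ^ 'q)"
  unfolding s_TO_def Inf_nat_def by (rule Least_le) blast

lemma overlap_generic:
  fixes W :: "'a set" and Z :: "'a set set" and \<kappa> :: "'a \<Rightarrow> nat" and P :: nat
  assumes finW: "finite W" and ascZ: "abs_simplicial_complex W Z"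
    and injphi: "inj_on \<phi> W" and phiV: "\<phi> ` W \<subseteq> V" and phiK: "\<forall>\<sigma>\<in>Z. \<phi> ` \<sigma> \<in> K"
    and deg: "\<forall>s\<in>V. finite (nbr K s) \<and> card (nbr K s) \<le> D"
    and piece: "\<And>k. card {w\<in>W. \<kappa> w = k} \<le> P"
  shows "s_TO TYPE('q::finite) W Z \<le> 2 ^ (D + 1) * (P + card {a\<in>W. \<exists>b\<in>W. {a, b} \<in> Z \<and> \<kappa> a \<noteq> \<kappa> b})"
proof -
  define bd where "bd = {a\<in>W. \<exists>b\<in>W. {a, b} \<in> Z \<and> \<kappa> a \<noteq> \<kappa> b}"
  define f :: "('a \<Rightarrow> real) \<Rightarrow> real ^ 'q" where "f = (\<lambda>x. \<chi> i. \<Sum>w\<in>W. x w * real (\<kappa> w))"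
  have cont: "continuous_on (realisation W Z) f"
    unfolding f_def
    by (intro continuous_on_vec_lambda continuous_on_sum continuous_on_mult_right
        continuous_on_subset[OF continuous_on_product_coordinates]) simp
  have ZW: "\<And>\<sigma>. \<sigma> \<in> Z \<Longrightarrow> finite \<sigma> \<and> \<sigma> \<noteq> {} \<and> \<sigma> \<subseteq> W"
    using K_fin[OF ascZ] by blast
  have finZ: "finite Z"
  proof -
    have "Z \<subseteq> Pow W" using ZW by blast
    then show ?thesis using finW by (simp add: finite_subset)
  qed
  have bdfin: "finite bd" unfolding bd_def using finW by simp
  have star: "\<And>a. a \<in> W \<Longrightarrow> card {\<sigma>\<in>Z. a \<in> \<sigma>} \<le> 2 ^ (D + 1)"
  proof -
    fix a assume aW: "a \<in> W"
    define NZ where "NZ = {w\<in>W. w \<noteq> a \<and> {a, w} \<in> Z}"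
    have finNZ: "finite NZ" unfolding NZ_def using finW by simp
    have "\<phi> ` NZ \<subseteq> nbr K (\<phi> a)"
    proof
      fix t assume "t \<in> \<phi> ` NZ"
      then obtain w where w: "w \<in> NZ" "t = \<phi> w" by blast
      then have "\<phi> ` {a, w} \<in> K" using phiK unfolding NZ_def by blast
      moreover have "\<phi> w \<noteq> \<phi> a" using w injphi aW unfolding NZ_def inj_on_def by blast
      ultimately show "t \<in> nbr K (\<phi> a)" using w unfolding nbr_def by simp
    qed
    moreover have "\<phi> a \<in> V" using aW phiV by blast
    ultimately have "card (\<phi> ` NZ) \<le> D" using deg by (meson card_mono order_trans)
    moreover have "card (\<phi> ` NZ) = card NZ"
      by (rule card_image) (rule inj_on_subset[OF injphi], auto simp: NZ_def)
    ultimately have cNZ: "card NZ \<le> D" by simp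
    have "{\<sigma>\<in>Z. a \<in> \<sigma>} \<subseteq> Pow (insert a NZ)"
    proof
      fix \<sigma> assume s: "\<sigma> \<in> {\<sigma>\<in>Z. a \<in> \<sigma>}"
      show "\<sigma> \<in> Pow (insert a NZ)"
        unfolding Pow_iff
      proof
        fix w assume w: "w \<in> \<sigma>"
        show "w \<in> insert a NZ"
        proof (cases "w = a")
          case False
          have "{a, w} \<subseteq> \<sigma>" using s w by simp
          then have "{a, w} \<in> Z" using sub_K[OF ascZ, of \<sigma> "{a, w}"] s by blast
          then show ?thesis using False ZW s w unfolding NZ_def by blast
        qed simp
      qed
    qed
    then have "card {\<sigma>\<in>Z. a \<in> \<sigma>} \<le> card (Pow (insert a NZ))"
      by (rule card_mono[rotated]) (simp add: finNZ)
    also have "\<dots> = 2 ^ card (insert a NZ)" by (rule card_Pow) (simp add: finNZ)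
    also have "\<dots> \<le> 2 ^ (D + 1)"
    proof (rule power_increasing)
      show "card (insert a NZ) \<le> D + 1" using cNZ finNZ by (simp add: card_insert_if)
    qed simp
    finally show "card {\<sigma>\<in>Z. a \<in> \<sigma>} \<le> 2 ^ (D + 1)" .
  qed
  have pw: "\<And>z. card {\<sigma>\<in>Z. z \<in> f ` closed_simplex W Z \<sigma>} \<le> 2 ^ (D + 1) * (P + card bd)"
  proof -
    fix z :: "real ^ 'q"
    define i0 :: 'q where "i0 = undefined"
    define A1 where "A1 = {w\<in>W. real (\<kappa> w) = z $ i0}"
    define A where "A = A1 \<union> bd"
    have finA: "finite A" unfolding A_def A1_def bd_def using finW by simp
    have cA1: "card A1 \<le> P"
    proof (cases "A1 = {}")
      case True then show ?thesis by simp
    next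
      case False
      then obtain w1 where w1: "w1 \<in> A1" by blast
      then have "A1 = {w\<in>W. \<kappa> w = \<kappa> w1}" unfolding A1_def by auto
      then show ?thesis using piece by simp
    qed
    have cA: "card A \<le> P + card bd"
      unfolding A_def using card_Un_le[of A1 bd] cA1 by linarith
    have cover: "{\<sigma>\<in>Z. z \<in> f ` closed_simplex W Z \<sigma>} \<subseteq> (\<Union>a\<in>A. {\<sigma>\<in>Z. a \<in> \<sigma>})"
    proof
      fix \<sigma> assume s: "\<sigma> \<in> {\<sigma>\<in>Z. z \<in> f ` closed_simplex W Z \<sigma>}"
      then have sZ: "\<sigma> \<in> Z" and zin: "z \<in> f ` closed_simplex W Z \<sigma>" by auto
      obtain x where x: "x \<in> realisation W Z" "supp x \<subseteq> \<sigma>" "z = f x"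
        using zin unfolding closed_simplex_def by blast
      show "\<sigma> \<in> (\<Union>a\<in>A. {\<sigma>\<in>Z. a \<in> \<sigma>})"
      proof (cases "\<sigma> \<inter> bd = {}")
        case False
        then obtain a where "a \<in> \<sigma>" "a \<in> bd" by blast
        then show ?thesis using sZ unfolding A_def by blast
      next
        case True
        obtain a0 where a0: "a0 \<in> \<sigma>" using ZW[OF sZ] by blast
        have a0W: "a0 \<in> W" using a0 ZW[OF sZ] by blast
        have const: "\<And>b. b \<in> \<sigma> \<Longrightarrow> \<kappa> b = \<kappa> a0"
        proof -
          fix b assume b: "b \<in> \<sigma>"
          show "\<kappa> b = \<kappa> a0"
          proof (cases "b = a0")
            case False
            have "{a0, b} \<subseteq> \<sigma>" using a0 b by simp
            then have "{a0, b} \<in> Z" using sub_K[OF ascZ sZ, of "{a0, b}"] by blast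
            moreover have "a0 \<notin> bd" using True a0 by blast
            moreover have "b \<in> W" using b ZW[OF sZ] by blast
            ultimately show ?thesis using a0W unfolding bd_def by auto
          qed simp
        qed
        have suppW: "supp x \<subseteq> W" using x(2) ZW[OF sZ] by blast
        have sum1: "(\<Sum>s\<in>supp x. x s) = 1" using x(1) unfolding realisation_def by blast
        have "z $ i0 = (\<Sum>w\<in>W. x w * real (\<kappa> w))" using x(3) unfolding f_def by simp
        also have "\<dots> = (\<Sum>w\<in>W. x w * real (\<kappa> a0))"
        proof (rule sum.cong[OF refl])
          fix w assume "w \<in> W"
          show "x w * real (\<kappa> w) = x w * real (\<kappa> a0)"
          proof (cases "x w = 0")
            case False
            then have "w \<in> \<sigma>" using x(2) unfolding supp_def by blast
            then show ?thesis using const by simp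
          qed simp
        qed
        also have "\<dots> = (\<Sum>w\<in>W. x w) * real (\<kappa> a0)" by (simp add: sum_distrib_right)
        also have "(\<Sum>w\<in>W. x w) = (\<Sum>s\<in>supp x. x s)"
          by (rule sum.mono_neutral_right[OF finW suppW]) (auto simp: supp_def)
        finally have "z $ i0 = real (\<kappa> a0)" using sum1 by simp
        then have "a0 \<in> A" unfolding A_def A1_def using a0W by simp
        then show ?thesis using sZ a0 by blast
      qed
    qed
    have "card {\<sigma>\<in>Z. z \<in> f ` closed_simplex W Z \<sigma>} \<le> card (\<Union>a\<in>A. {\<sigma>\<in>Z. a \<in> \<sigma>})"
      by (rule card_mono[OF _ cover]) (simp add: finA finZ)
    also have "\<dots> \<le> (\<Sum>a\<in>A. card {\<sigma>\<in>Z. a \<in> \<sigma>})" by (rule card_UN_le[OF finA])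
    also have "\<dots> \<le> (\<Sum>a\<in>A. 2 ^ (D + 1))"
    proof (rule sum_mono)
      fix a assume "a \<in> A"
      then have "a \<in> W" unfolding A_def A1_def bd_def by blast
      then show "card {\<sigma>\<in>Z. a \<in> \<sigma>} \<le> 2 ^ (D + 1)" by (rule star)
    qed
    also have "\<dots> = card A * 2 ^ (D + 1)" by simp
    also have "\<dots> \<le> (P + card bd) * 2 ^ (D + 1)" using cA by simp
    finally show "card {\<sigma>\<in>Z. z \<in> f ` closed_simplex W Z \<sigma>} \<le> 2 ^ (D + 1) * (P + card bd)"
      by (simp add: mult.commute)
  qed
  have "s_Ov W Z f \<le> 2 ^ (D + 1) * (P + card bd)"
  proof -
    let ?I = "(\<lambda>z. card {\<sigma>\<in>Z. z \<in> f ` closed_simplex W Z \<sigma>}) ` UNIV"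
    have "?I \<subseteq> {..card Z}"
    proof
      fix y assume "y \<in> ?I"
      then obtain z where "y = card {\<sigma>\<in>Z. z \<in> f ` closed_simplex W Z \<sigma>}" by blast
      then have "y \<le> card Z" using finZ by (simp add: card_mono)
      then show "y \<in> {..card Z}" by simp
    qed
    then have "finite ?I" by (rule finite_subset) simp
    moreover have "?I \<noteq> {}" by simp
    ultimately show ?thesis unfolding s_Ov_def using pw by (simp add: Max_le_iff)
  qed
  moreover have "s_TO TYPE('q) W Z \<le> s_Ov W Z f" by (rule s_TO_le[OF cont])
  ultimately show ?thesis unfolding bd_def by linarith
qed



definition near :: "'a set \<Rightarrow> 'a set set \<Rightarrow> ('a \<Rightarrow> real) set \<Rightarrow> 'a \<Rightarrow> nat \<Rightarrow> bool" where
  "near V K U x t \<longleftrightarrow> (\<exists>y. vtx y \<in> U \<and> reach V K t x y)"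

definition crit :: "'a set \<Rightarrow> 'a set set \<Rightarrow> ('a \<Rightarrow> real) set \<Rightarrow> 'a \<Rightarrow> nat \<Rightarrow> bool" where
  "crit V K U x t \<longleftrightarrow> near V K U x t \<and> (\<forall>t'<t. \<not> near V K U x t')"

lemma crit_unique: "crit V K U x t1 \<Longrightarrow> crit V K U x t2 \<Longrightarrow> t1 = t2"
proof -
  assume a: "crit V K U x t1" and b: "crit V K U x t2"
  show "t1 = t2"
  proof (rule ccontr)
    assume "t1 \<noteq> t2"
    then consider "t1 < t2" | "t2 < t1" by linarith
    then show False
    proof cases
      case 1 then show False using a b unfolding crit_def by blast
    next
      case 2 then show False using a b unfolding crit_def by blast
    qed
  qed
qed

lemma card_le1: "finite A \<Longrightarrow> (\<And>a b. a \<in> A \<Longrightarrow> b \<in> A \<Longrightarrow> a = b) \<Longrightarrow> card A \<le> 1"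
proof -
  assume fin: "finite A" and h: "\<And>a b. a \<in> A \<Longrightarrow> b \<in> A \<Longrightarrow> a = b"
  have "\<forall>a1\<in>A. \<forall>a2\<in>A. a1 = a2" using h by blast
  then show "card A \<le> 1" using card_le_Suc0_iff_eq[OF fin] by simp
qed

lemma card_bd_sum:
  fixes B :: "nat \<Rightarrow> 'b set" and W :: "'b set" and T :: nat
  assumes finW: "finite W" and sub: "\<And>t. B t \<subseteq> W"
  shows "(\<Sum>t\<in>{..T}. card (B t)) = (\<Sum>a\<in>W. card {t\<in>{..T}. a \<in> B t})"
proof -
  have e1: "\<And>t. card (B t) = (\<Sum>a\<in>W. if a \<in> B t then 1 else 0)"
  proof -
    fix t
    have "B t = {a\<in>W. a \<in> B t}" using sub by blast
    then have "card (B t) = (\<Sum>a\<in>{a\<in>W. a \<in> B t}. 1)" by simp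
    also have "\<dots> = (\<Sum>a\<in>W. if a \<in> B t then 1 else 0)" by (rule sum.inter_filter[OF finW])
    finally show "card (B t) = (\<Sum>a\<in>W. if a \<in> B t then 1 else 0)" .
  qed
  have e2: "\<And>a. card {t\<in>{..T}. a \<in> B t} = (\<Sum>t\<in>{..T}. if a \<in> B t then 1 else 0)"
  proof -
    fix a
    have "card {t\<in>{..T}. a \<in> B t} = (\<Sum>t\<in>{t\<in>{..T}. a \<in> B t}. 1)" by simp
    also have "\<dots> = (\<Sum>t\<in>{..T}. if a \<in> B t then 1 else 0)" by (rule sum.inter_filter) simp
    finally show "card {t\<in>{..T}. a \<in> B t} = (\<Sum>t\<in>{..T}. if a \<in> B t then 1 else 0)" .
  qed
  show ?thesis unfolding e1 e2 by (rule sum.swap)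
qed

context
  fixes V :: "'a set" and K :: "'a set set" and D :: nat
  assumes asc: "abs_simplicial_complex V K"
    and deg: "\<forall>s\<in>V. finite (nbr K s) \<and> card (nbr K s) \<le> D"
begin

lemma near_mono: "near V K U x t \<Longrightarrow> t \<le> t' \<Longrightarrow> near V K U x t'"
  unfolding near_def using reach_mono[OF asc] by blast

lemma near_step: "near V K U x t \<Longrightarrow> {x', x} \<in> K \<Longrightarrow> near V K U x' (Suc t)"
  unfolding near_def using reach_prepend[OF asc] by blast

lemma partition_exists:
  fixes W :: "'b set" and Z :: "'b set set" and \<phi> :: "'b \<Rightarrow> 'a" and T n :: nat and c :: real
  assumes cpos: "c > 0"
    and AN: "\<forall>s::real. s > 0 \<longrightarrow>
     (\<exists>\<U>. \<Union>\<U> = realisation V K \<and>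
        (\<forall>U\<in>\<U>. \<forall>x\<in>U. \<forall>y\<in>U. nat_metric V K x y \<le> ereal (c * s)) \<and>
        (\<forall>x\<in>realisation V K. finite {U\<in>\<U>. \<exists>y\<in>U. nat_metric V K x y < ereal s} \<and>
                 card {U\<in>\<U>. \<exists>y\<in>U. nat_metric V K x y < ereal s} \<le> n + 1))"
    and finW: "finite W" and injphi: "inj_on \<phi> W" and phiV: "\<phi> ` W \<subseteq> V"
    and phiK: "\<forall>\<sigma>\<in>Z. \<phi> ` \<sigma> \<in> K"
  shows "\<exists>\<kappa>::'b \<Rightarrow> nat. (\<forall>k. card {w\<in>W. \<kappa> w = k} \<le> (D + 1) ^ (2 * T + nat \<lceil>2 * (real D + 1) * (c * (sqrt 2 * (real T + 2)) + 1) + 1\<rceil>))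
      \<and> (T + 1) * card {a\<in>W. \<exists>b\<in>W. {a, b} \<in> Z \<and> \<kappa> a \<noteq> \<kappa> b} \<le> 2 * (n + 1) * card W"
proof -
  define s where "s = sqrt 2 * (real T + 2)"
  define Md where "Md = nat \<lceil>2 * (real D + 1) * (c * s + 1) + 1\<rceil>"
  have spos: "s > 0" unfolding s_def by simp
  obtain \<U> where cov: "\<Union>\<U> = realisation V K"
    and diam: "\<forall>U\<in>\<U>. \<forall>x\<in>U. \<forall>y\<in>U. nat_metric V K x y \<le> ereal (c * s)"
    and mult: "\<forall>x\<in>realisation V K. finite {U\<in>\<U>. \<exists>y\<in>U. nat_metric V K x y < ereal s} \<and>
                 card {U\<in>\<U>. \<exists>y\<in>U. nat_metric V K x y < ereal s} \<le> n + 1"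
  proof -
    have "\<exists>\<U>. \<Union>\<U> = realisation V K \<and>
        (\<forall>U\<in>\<U>. \<forall>x\<in>U. \<forall>y\<in>U. nat_metric V K x y \<le> ereal (c * s)) \<and>
        (\<forall>x\<in>realisation V K. finite {U\<in>\<U>. \<exists>y\<in>U. nat_metric V K x y < ereal s} \<and>
                 card {U\<in>\<U>. \<exists>y\<in>U. nat_metric V K x y < ereal s} \<le> n + 1)"
      by (rule mp[OF spec[OF AN, of s] spos])
    then obtain \<U> where H: "\<Union>\<U> = realisation V K \<and>
        (\<forall>U\<in>\<U>. \<forall>x\<in>U. \<forall>y\<in>U. nat_metric V K x y \<le> ereal (c * s)) \<and>
        (\<forall>x\<in>realisation V K. finite {U\<in>\<U>. \<exists>y\<in>U. nat_metric V K x y < ereal s} \<and>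
                 card {U\<in>\<U>. \<exists>y\<in>U. nat_metric V K x y < ereal s} \<le> n + 1)" ..
    show ?thesis by (rule that[OF conjunct1[OF H] conjunct1[OF conjunct2[OF H]] conjunct2[OF conjunct2[OF H]]])
  qed
  define Ra where "Ra = (\<lambda>a. {U\<in>\<U>. near V K U (\<phi> a) (Suc T)})"
  have Ra_fin: "\<And>a. a \<in> W \<Longrightarrow> finite (Ra a) \<and> card (Ra a) \<le> n + 1"
  proof -
    fix a assume aW: "a \<in> W"
    have xV: "\<phi> a \<in> V" using aW phiV by blast
    then have xP: "vtx (\<phi> a) \<in> realisation V K" by (rule vtx_real[OF asc])
    have sub: "Ra a \<subseteq> {U\<in>\<U>. \<exists>y\<in>U. nat_metric V K (vtx (\<phi> a)) y < ereal s}"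
    proof
      fix U assume "U \<in> Ra a"
      then have U: "U \<in> \<U>" "near V K U (\<phi> a) (Suc T)" unfolding Ra_def by auto
      then obtain y where y: "vtx y \<in> U" "reach V K (Suc T) (\<phi> a) y" unfolding near_def by blast
      have "nat_metric V K (vtx (\<phi> a)) (vtx y) \<le> ereal (real (Suc T) * sqrt 2)"
        by (rule reach_metric[OF asc y(2)])
      also have "\<dots> < ereal s" unfolding s_def by (simp add: algebra_simps)
      finally show "U \<in> {U\<in>\<U>. \<exists>y\<in>U. nat_metric V K (vtx (\<phi> a)) y < ereal s}" using U y by blast
    qed
    have "finite {U\<in>\<U>. \<exists>y\<in>U. nat_metric V K (vtx (\<phi> a)) y < ereal s}"
      "card {U\<in>\<U>. \<exists>y\<in>U. nat_metric V K (vtx (\<phi> a)) y < ereal s} \<le> n + 1"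
      using mult xP by blast+
    then have "finite (Ra a)" "card (Ra a) \<le> card {U\<in>\<U>. \<exists>y\<in>U. nat_metric V K (vtx (\<phi> a)) y < ereal s}"
      using finite_subset[OF sub] card_mono[OF _ sub] by blast+
    then show "finite (Ra a) \<and> card (Ra a) \<le> n + 1"
      using \<open>card {U\<in>\<U>. \<exists>y\<in>U. nat_metric V K (vtx (\<phi> a)) y < ereal s} \<le> n + 1\<close> by linarith
  qed
  define R where "R = (\<Union>a\<in>W. Ra a)"
  have finR: "finite R" unfolding R_def using finW Ra_fin by blast
  obtain xs where xs: "set xs = R" using finite_list[OF finR] by blast
  have RU: "R \<subseteq> \<U>" unfolding R_def Ra_def by blast
  define \<kappa> where "\<kappa> = (\<lambda>t x. LEAST i. i < length xs \<and> near V K (xs ! i) x t)"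
  have ex: "\<And>a t. a \<in> W \<Longrightarrow> \<exists>i. i < length xs \<and> near V K (xs ! i) (\<phi> a) t"
  proof -
    fix a t assume aW: "a \<in> W"
    have xV: "\<phi> a \<in> V" using aW phiV by blast
    then have "vtx (\<phi> a) \<in> realisation V K" by (rule vtx_real[OF asc])
    then have "vtx (\<phi> a) \<in> \<Union>\<U>" using cov by simp
    then obtain U where U: "U \<in> \<U>" "vtx (\<phi> a) \<in> U" by blast
    have r0: "reach V K 0 (\<phi> a) (\<phi> a)" using xV by (rule reach.r0)
    have nr: "\<And>t. near V K U (\<phi> a) t" unfolding near_def using U(2) reach_mono[OF asc r0 le0] by blast
    then have "U \<in> R" unfolding R_def Ra_def using U(1) aW by blast
    then have "U \<in> set xs" using xs by simp
    then obtain i where "i < length xs" "xs ! i = U" by (auto simp: in_set_conv_nth)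
    then show "\<exists>i. i < length xs \<and> near V K (xs ! i) (\<phi> a) t" using nr by blast
  qed
  have kprop: "\<And>a t. a \<in> W \<Longrightarrow> \<kappa> t (\<phi> a) < length xs \<and> near V K (xs ! \<kappa> t (\<phi> a)) (\<phi> a) t"
  proof -
    fix a t assume aW: "a \<in> W"
    show "\<kappa> t (\<phi> a) < length xs \<and> near V K (xs ! \<kappa> t (\<phi> a)) (\<phi> a) t"
      unfolding \<kappa>_def by (rule LeastI_ex[OF ex[OF aW]])
  qed
  have kmin: "\<And>a t i. a \<in> W \<Longrightarrow> i < \<kappa> t (\<phi> a) \<Longrightarrow> i < length xs \<Longrightarrow> \<not> near V K (xs ! i) (\<phi> a) t"
  proof -
    fix a t i assume aW: "a \<in> W" and lt: "i < \<kappa> t (\<phi> a)" and il: "i < length xs"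
    have "\<not> (i < length xs \<and> near V K (xs ! i) (\<phi> a) t)"
      using not_less_Least[of i "\<lambda>i. i < length xs \<and> near V K (xs ! i) (\<phi> a) t"] lt
      unfolding \<kappa>_def by blast
    then show "\<not> near V K (xs ! i) (\<phi> a) t" using il by blast
  qed
  define bd where "bd = (\<lambda>t. {a\<in>W. \<exists>b\<in>W. {a, b} \<in> Z \<and> \<kappa> t (\<phi> a) \<noteq> \<kappa> t (\<phi> b)})"
  have C1: "\<And>a t. t \<le> T \<Longrightarrow> a \<in> bd t \<Longrightarrow> \<exists>U\<in>Ra a. crit V K U (\<phi> a) t \<or> crit V K U (\<phi> a) (Suc t)"
  proof -
    fix a t assume tT: "t \<le> T" and abd: "a \<in> bd t"
    then obtain b where aW: "a \<in> W" and bW: "b \<in> W" and ab: "{a, b} \<in> Z" and ne: "\<kappa> t (\<phi> a) \<noteq> \<kappa> t (\<phi> b)"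
      unfolding bd_def by blast
    have "\<phi> ` {a, b} \<in> K" using phiK ab by blast
    then have e1: "{\<phi> a, \<phi> b} \<in> K" and e2: "{\<phi> b, \<phi> a} \<in> K" by (simp_all add: insert_commute)
    define i where "i = \<kappa> t (\<phi> a)"
    define j where "j = \<kappa> t (\<phi> b)"
    have ia: "i < length xs" "near V K (xs ! i) (\<phi> a) t" using kprop[OF aW] unfolding i_def by blast+
    have jb: "j < length xs" "near V K (xs ! j) (\<phi> b) t" using kprop[OF bW] unfolding j_def by blast+
    have Rin: "\<And>U. U \<in> set xs \<Longrightarrow> near V K U (\<phi> a) (Suc T) \<Longrightarrow> U \<in> Ra a"
      using xs RU unfolding Ra_def by blast
    consider "i < j" | "j < i" using ne unfolding i_def j_def by linarith
    then show "\<exists>U\<in>Ra a. crit V K U (\<phi> a) t \<or> crit V K U (\<phi> a) (Suc t)"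
    proof cases
      case 1
      let ?U = "xs ! i"
      have nb: "\<not> near V K ?U (\<phi> b) t" using kmin[OF bW, of i t] 1 ia(1) unfolding j_def by blast
      have "crit V K ?U (\<phi> a) t"
        unfolding crit_def
      proof (intro conjI allI impI)
        show "near V K ?U (\<phi> a) t" by (rule ia(2))
      next
        fix t' assume "t' < t"
        show "\<not> near V K ?U (\<phi> a) t'"
        proof
          assume "near V K ?U (\<phi> a) t'"
          then have "near V K ?U (\<phi> b) (Suc t')" using near_step e2 by blast
          then have "near V K ?U (\<phi> b) t" using near_mono \<open>t' < t\<close> by (meson Suc_leI)
          then show False using nb by blast
        qed
      qed
      moreover have "?U \<in> Ra a"
        using Rin[of ?U] ia near_mono[OF ia(2), of "Suc T"] tT by simp
      ultimately show ?thesis by blast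
    next
      case 2
      let ?U = "xs ! j"
      have na: "\<not> near V K ?U (\<phi> a) t" using kmin[OF aW, of j t] 2 jb(1) unfolding i_def by blast
      have nS: "near V K ?U (\<phi> a) (Suc t)" using near_step[OF jb(2) e1] .
      have "crit V K ?U (\<phi> a) (Suc t)"
        unfolding crit_def
      proof (intro conjI allI impI)
        show "near V K ?U (\<phi> a) (Suc t)" by (rule nS)
      next
        fix t' assume "t' < Suc t"
        show "\<not> near V K ?U (\<phi> a) t'"
        proof
          assume "near V K ?U (\<phi> a) t'"
          then have "near V K ?U (\<phi> a) t" using near_mono \<open>t' < Suc t\<close> by (meson less_Suc_eq_le)
          then show False using na by blast
        qed
      qed
      moreover have "?U \<in> Ra a"
        using Rin[of ?U] jb near_mono[OF nS, of "Suc T"] tT by simp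
      ultimately show ?thesis by blast
    qed
  qed
  have C2: "\<And>a. a \<in> W \<Longrightarrow> card {t\<in>{..T}. a \<in> bd t} \<le> 2 * (n + 1)"
  proof -
    fix a assume aW: "a \<in> W"
    define S1 where "S1 = (\<lambda>U. {t\<in>{..T}. crit V K U (\<phi> a) t})"
    define S2 where "S2 = (\<lambda>U. {t\<in>{..T}. crit V K U (\<phi> a) (Suc t)})"
    have sub: "{t\<in>{..T}. a \<in> bd t} \<subseteq> (\<Union>U\<in>Ra a. S1 U \<union> S2 U)"
    proof
      fix t assume "t \<in> {t\<in>{..T}. a \<in> bd t}"
      then have "t \<le> T" "a \<in> bd t" by auto
      then obtain U where "U \<in> Ra a" "crit V K U (\<phi> a) t \<or> crit V K U (\<phi> a) (Suc t)" using C1 by blast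
      then show "t \<in> (\<Union>U\<in>Ra a. S1 U \<union> S2 U)" using \<open>t \<le> T\<close> unfolding S1_def S2_def by auto
    qed
    have finRa: "finite (Ra a)" and cRa: "card (Ra a) \<le> n + 1" using Ra_fin[OF aW] by blast+
    have c12: "\<And>U. card (S1 U \<union> S2 U) \<le> 2"
    proof -
      fix U
      have "card (S1 U) \<le> 1" unfolding S1_def
      proof (rule card_le1)
        fix x y assume "x \<in> {t \<in> {..T}. crit V K U (\<phi> a) t}" "y \<in> {t \<in> {..T}. crit V K U (\<phi> a) t}"
        then show "x = y" using crit_unique[of V K U "\<phi> a" x y] by blast
      qed simp
      moreover have "card (S2 U) \<le> 1" unfolding S2_def
      proof (rule card_le1)
        fix x y assume "x \<in> {t \<in> {..T}. crit V K U (\<phi> a) (Suc t)}" "y \<in> {t \<in> {..T}. crit V K U (\<phi> a) (Suc t)}"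
        then have "Suc x = Suc y" using crit_unique[of V K U "\<phi> a" "Suc x" "Suc y"] by blast
        then show "x = y" by simp
      qed simp
      ultimately show "card (S1 U \<union> S2 U) \<le> 2" using card_Un_le[of "S1 U" "S2 U"] by linarith
    qed
    have "card {t\<in>{..T}. a \<in> bd t} \<le> card (\<Union>U\<in>Ra a. S1 U \<union> S2 U)"
      by (rule card_mono[OF _ sub]) (simp add: finRa S1_def S2_def)
    also have "\<dots> \<le> (\<Sum>U\<in>Ra a. card (S1 U \<union> S2 U))" by (rule card_UN_le[OF finRa])
    also have "\<dots> \<le> (\<Sum>U\<in>Ra a. 2)" by (rule sum_mono) (rule c12)
    also have "\<dots> = 2 * card (Ra a)" by simp
    also have "\<dots> \<le> 2 * (n + 1)" using cRa by simp
    finally show "card {t\<in>{..T}. a \<in> bd t} \<le> 2 * (n + 1)" .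
  qed
  have C3: "(\<Sum>t\<in>{..T}. card (bd t)) \<le> 2 * (n + 1) * card W"
  proof -
    have "(\<Sum>t\<in>{..T}. card (bd t)) = (\<Sum>a\<in>W. card {t\<in>{..T}. a \<in> bd t})"
      by (rule card_bd_sum[OF finW]) (auto simp: bd_def)
    also have "\<dots> \<le> (\<Sum>a\<in>W. 2 * (n + 1))" by (rule sum_mono) (rule C2)
    also have "\<dots> = 2 * (n + 1) * card W" by simp
    finally show ?thesis .
  qed
  have "\<exists>\<tau>\<in>{..T}. (T + 1) * card (bd \<tau>) \<le> 2 * (n + 1) * card W"
  proof (rule ccontr)
    assume "\<not> ?thesis"
    then have big: "\<And>t. t \<in> {..T} \<Longrightarrow> 2 * (n + 1) * card W < (T + 1) * card (bd t)"
      by (simp add: not_le)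
    have "(\<Sum>t\<in>{..T}. 2 * (n + 1) * card W) < (\<Sum>t\<in>{..T}. (T + 1) * card (bd t))"
      apply (rule sum_strict_mono)
        apply simp
       apply simp
      apply (rule big)
      apply assumption
      done
    also have "\<dots> = (T + 1) * (\<Sum>t\<in>{..T}. card (bd t))" by (simp add: sum_distrib_left)
    also have "\<dots> \<le> (T + 1) * (2 * (n + 1) * card W)" using C3 by (rule mult_left_mono) simp
    finally show False by simp
  qed
  then obtain \<tau> where \<tau>T: "\<tau> \<le> T" and \<tau>bd: "(T + 1) * card (bd \<tau>) \<le> 2 * (n + 1) * card W"
    by auto
  have piece: "\<And>k. card {w\<in>W. \<kappa> \<tau> (\<phi> w) = k} \<le> (D + 1) ^ (2 * T + Md)"
  proof -
    fix k
    let ?Pc = "{w\<in>W. \<kappa> \<tau> (\<phi> w) = k}"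
    show "card ?Pc \<le> (D + 1) ^ (2 * T + Md)"
    proof (cases "?Pc = {}")
      case True then show ?thesis by (subst True) simp
    next
      case False
      then obtain w0 where w0: "w0 \<in> W" "\<kappa> \<tau> (\<phi> w0) = k" by blast
      have kU: "k < length xs" "near V K (xs ! k) (\<phi> w0) \<tau>" using kprop[OF w0(1), of \<tau>] w0(2) by auto
      have UU: "xs ! k \<in> \<U>" using kU(1) xs RU by (meson nth_mem subsetD)
      obtain y0 where y0: "vtx y0 \<in> xs ! k" "reach V K \<tau> (\<phi> w0) y0" using kU(2) unfolding near_def by blast
      have y0V: "y0 \<in> V" using reach_V[OF asc y0(2)] by blast
      have "\<phi> ` ?Pc \<subseteq> {v. reach V K (2 * T + Md) (\<phi> w0) v}"
      proof
        fix v assume "v \<in> \<phi> ` ?Pc"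
        then obtain w where w: "w \<in> W" "\<kappa> \<tau> (\<phi> w) = k" "v = \<phi> w" by blast
        have "near V K (xs ! k) (\<phi> w) \<tau>" using kprop[OF w(1), of \<tau>] w(2) by auto
        then obtain y where y: "vtx y \<in> xs ! k" "reach V K \<tau> (\<phi> w) y" unfolding near_def by blast
        have "nat_metric V K (vtx y0) (vtx y) \<le> ereal (c * s)" using diam UU y0(1) y(1) by blast
        then obtain m where m: "reach V K m y0 y" "real m \<le> 2 * (real D + 1) * (c * s + 1) + 1"
          using metric_reach[OF asc deg y0V] by blast
        have "m \<le> Md" unfolding Md_def using m(2) by linarith
        then have r1: "reach V K Md y0 y" using reach_mono[OF asc m(1)] by blast
        have r2: "reach V K (\<tau> + Md) (\<phi> w0) y" using reach_trans[OF asc r1 y0(2)] .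
        have r3: "reach V K \<tau> y (\<phi> w)" using reach_sym[OF asc y(2)] .
        have r4: "reach V K (\<tau> + Md + \<tau>) (\<phi> w0) (\<phi> w)" using reach_trans[OF asc r3 r2] .
        have "\<tau> + Md + \<tau> \<le> 2 * T + Md" using \<tau>T by simp
        then have "reach V K (2 * T + Md) (\<phi> w0) (\<phi> w)" using reach_mono[OF asc r4] by blast
        then show "v \<in> {v. reach V K (2 * T + Md) (\<phi> w0) v}" using w(3) by simp
      qed
      then have "card (\<phi> ` ?Pc) \<le> (D + 1) ^ (2 * T + Md)"
        using ball_card[OF asc deg, of "2 * T + Md" "\<phi> w0"] by (meson card_mono order_trans)
      moreover have "card (\<phi> ` ?Pc) = card ?Pc"
        by (rule card_image) (rule inj_on_subset[OF injphi], blast)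
      ultimately show ?thesis by simp
    qed
  qed
  show ?thesis
    apply (rule exI[of _ "\<lambda>w. \<kappa> \<tau> (\<phi> w)"])
    using piece \<tau>bd unfolding bd_def Md_def s_def by simp
qed

end


lemma sqrt_bound: "sqrt (1 + real r) \<le> 2 * (real r / ln (1 + real r)) + 2 / ln 2"
proof (cases "r = 0")
  case True
  have "ln (2::real) \<le> 2 - 1" by (rule ln_le_minus_one) simp
  moreover have "ln (2::real) > 0" by simp
  ultimately have "1 \<le> 2 / ln (2::real)" by (simp add: divide_simps)
  then show ?thesis using True by simp
next
  case False
  define x where "x = 1 + real r"
  have x2: "x \<ge> 2" using False unfolding x_def by simp
  have lnpos: "ln x > 0" using x2 by simp
  have ln2: "ln x \<ge> ln 2" using x2 by simp
  have "ln (sqrt x) \<le> sqrt x - 1" by (rule ln_le_minus_one) (use x2 in simp)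
  then have "ln x \<le> 2 * sqrt x" using ln_sqrt[of x] x2 by simp
  then have "sqrt x * ln x \<le> sqrt x * (2 * sqrt x)" using x2 by (intro mult_left_mono) simp_all
  also have "\<dots> = 2 * x" using x2 by simp
  finally have "sqrt x \<le> 2 * x / ln x" using lnpos by (simp add: divide_simps mult.commute)
  also have "\<dots> = 2 * (real r / ln x) + 2 / ln x" unfolding x_def by (simp add: add_divide_distrib)
  also have "2 / ln x \<le> 2 / ln 2"
    using ln2 lnpos by (intro divide_left_mono) simp_all
  finally show ?thesis unfolding x_def by simp
qed

lemma G_mono:
  assumes C: "C \<ge> (1::nat)"
  shows "real r / ln (1 + real r) \<le> real C * real r / ln (1 + real C * real r)"
proof (cases "r = 0")
  case True then show ?thesis by simp
next
  case False
  have b: "1 + real C * real r \<le> (1 + real r) ^ C" using Bernoulli_inequality[of "real r" C] by simp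
  have p1: "1 + real C * real r > 0" by (simp add: add_pos_nonneg)
  have "ln (1 + real C * real r) \<le> ln ((1 + real r) ^ C)" using b p1 by simp
  also have "\<dots> = real C * ln (1 + real r)" by (simp add: ln_realpow)
  finally have le: "ln (1 + real C * real r) \<le> real C * ln (1 + real r)" .
  have l1: "ln (1 + real r) > 0" using False by simp
  have l2: "ln (1 + real C * real r) > 0" using False C by (simp add: ln_gt_zero)
  have "real r * ln (1 + real C * real r) \<le> real r * (real C * ln (1 + real r))"
    using le by (intro mult_left_mono) simp_all
  then show ?thesis using l1 l2 by (simp add: divide_simps mult.commute mult.left_commute)
qed


lemma asym:
  fixes D n r :: nat and c :: real
  assumes cpos: "c > 0" and D1: "D \<ge> 1"
  defines "lam \<equiv> 2 + 2 * (real D + 1) * c * sqrt 2"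
    and "mu \<equiv> 2 * (real D + 1) * (2 * c * sqrt 2 + 1) + 2"
    and "bet \<equiv> ln (real D + 1)"
  defines "eps \<equiv> 1 / (2 * lam * bet)"
  defines "T \<equiv> nat \<lfloor>eps * ln (1 + real r)\<rfloor>"
  shows "real ((D + 1) ^ (2 * T + nat \<lceil>2 * (real D + 1) * (c * (sqrt 2 * (real T + 2)) + 1) + 1\<rceil>))
          + 2 * (real n + 1) * real r / (real T + 1)
        \<le> (2 * exp (mu * bet) + 2 * (real n + 1) / eps) * (real r / ln (1 + real r))
           + 2 * exp (mu * bet) / ln 2"
proof -
  define G where "G = real r / ln (1 + real r)"
  have Gnn: "G \<ge> 0" unfolding G_def by simp
  have lampos: "lam > 0" unfolding lam_def using cpos by (simp add: add_pos_nonneg)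
  have betpos: "bet > 0" unfolding bet_def using D1 by simp
  have epspos: "eps > 0" unfolding eps_def using lampos betpos by simp
  define x where "x = 2 * (real D + 1) * (c * (sqrt 2 * (real T + 2)) + 1) + 1"
  have xnn: "x \<ge> 0" unfolding x_def using cpos by simp
  define E where "E = 2 * T + nat \<lceil>x\<rceil>"
  have "real (nat \<lceil>x\<rceil>) \<le> x + 1" using xnn by linarith
  then have Ele: "real E \<le> lam * real T + mu"
    unfolding E_def x_def lam_def mu_def by (simp add: algebra_simps)
  have yT: "real T \<le> eps * ln (1 + real r)"
  proof -
    have "eps * ln (1 + real r) \<ge> 0" using epspos by simp
    then show ?thesis unfolding T_def by linarith
  qed
  have "real ((D + 1) ^ E) = exp (real E * bet)"
  proof -
    have "real ((D + 1) ^ E) = (real D + 1) ^ E" by (simp add: add.commute)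
    also have "\<dots> = exp (ln ((real D + 1) ^ E))" by simp
    also have "\<dots> = exp (real E * bet)" unfolding bet_def by (simp add: ln_realpow)
    finally show ?thesis .
  qed
  also have "\<dots> \<le> exp ((lam * real T + mu) * bet)" using Ele betpos by simp
  also have "\<dots> = exp (mu * bet) * exp (lam * bet * real T)" by (simp add: algebra_simps exp_add[symmetric])
  also have "\<dots> \<le> exp (mu * bet) * exp (ln (1 + real r) / 2)"
  proof -
    have "lam * bet * real T \<le> lam * bet * (eps * ln (1 + real r))"
      using yT lampos betpos by (intro mult_left_mono) simp_all
    also have "\<dots> = ln (1 + real r) / 2" unfolding eps_def using lampos betpos by simp
    finally show ?thesis by simp
  qed
  also have "exp (ln (1 + real r) / 2) = sqrt (1 + real r)"
  proof -
    have "sqrt (1 + real r) = (1 + real r) powr (1/2)" by (simp add: powr_half_sqrt)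
    also have "\<dots> = exp (ln (1 + real r) / 2)" by (simp add: powr_def)
    finally show ?thesis by simp
  qed
  finally have P1: "real ((D + 1) ^ E) \<le> exp (mu * bet) * sqrt (1 + real r)" .
  also have "\<dots> \<le> exp (mu * bet) * (2 * G + 2 / ln 2)"
    unfolding G_def using sqrt_bound[of r] by (intro mult_left_mono) simp_all
  finally have P2: "real ((D + 1) ^ E) \<le> exp (mu * bet) * (2 * G + 2 / ln 2)" .
  have P3: "real r / (real T + 1) \<le> G / eps"
  proof (cases "r = 0")
    case True then show ?thesis by (simp add: G_def)
  next
    case False
    have lnp: "ln (1 + real r) > 0" using False by simp
    have "real T + 1 \<ge> eps * ln (1 + real r)"
      unfolding T_def using epspos lnp by linarith
    moreover have "eps * ln (1 + real r) > 0" using epspos lnp by simp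
    ultimately have "real r / (real T + 1) \<le> real r / (eps * ln (1 + real r))"
      by (intro divide_left_mono) simp_all
    also have "\<dots> = G / eps" unfolding G_def by simp
    finally show ?thesis .
  qed
  have "2 * (real n + 1) * real r / (real T + 1) = 2 * (real n + 1) * (real r / (real T + 1))" by simp
  also have "\<dots> \<le> 2 * (real n + 1) * (G / eps)" using P3 by (intro mult_left_mono) simp_all
  finally have P4: "2 * (real n + 1) * real r / (real T + 1) \<le> 2 * (real n + 1) * (G / eps)" .
  have "real ((D + 1) ^ E) + 2 * (real n + 1) * real r / (real T + 1)
        \<le> exp (mu * bet) * (2 * G + 2 / ln 2) + 2 * (real n + 1) * (G / eps)" using P2 P4 by linarith
  also have "\<dots> = (2 * exp (mu * bet) + 2 * (real n + 1) / eps) * G + 2 * exp (mu * bet) / ln 2"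
    by (simp add: algebra_simps add_divide_distrib)
  finally show ?thesis unfolding E_def x_def G_def .
qed



theorem corollary1p16:
  fixes V :: "'a set" and K :: "'a set set"
  assumes "abs_simplicial_complex V K"
    and "bounded_degree V K"
    and "finite_AN_dim (realisation V K) (nat_metric V K)"
  shows "\<exists>C::real. \<forall>r::nat.
           real (s_TO_X TYPE('q::finite) V K r) \<le> C * ((C * real r) / ln (1 + C * real r)) + C"
proof -
  note asc = assms(1)
  obtain D0 where D0: "\<forall>s\<in>V. finite {t. t \<noteq> s \<and> {s, t} \<in> K} \<and> card {t. t \<noteq> s \<and> {s, t} \<in> K} \<le> D0"
    using assms(2) unfolding bounded_degree_def by blast
  define D where "D = D0 + 1"
  have D1: "D \<ge> 1" unfolding D_def by simp
  have deg: "\<forall>s\<in>V. finite (nbr K s) \<and> card (nbr K s) \<le> D"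
  proof
    fix s assume "s \<in> V"
    then have "finite {t. t \<noteq> s \<and> {s, t} \<in> K} \<and> card {t. t \<noteq> s \<and> {s, t} \<in> K} \<le> D0"
      using D0 by blast
    then show "finite (nbr K s) \<and> card (nbr K s) \<le> D" unfolding nbr_def D_def by simp
  qed
  have "\<exists>n::nat. \<exists>c::real. c > 0 \<and> (\<forall>s::real. s > 0 \<longrightarrow>
     (\<exists>\<U>. \<Union>\<U> = realisation V K \<and>
        (\<forall>U\<in>\<U>. \<forall>x\<in>U. \<forall>y\<in>U. nat_metric V K x y \<le> ereal (c * s)) \<and>
        (\<forall>x\<in>realisation V K. finite {U\<in>\<U>. \<exists>y\<in>U. nat_metric V K x y < ereal s} \<and>
                 card {U\<in>\<U>. \<exists>y\<in>U. nat_metric V K x y < ereal s} \<le> n + 1)))"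
    using assms(3) unfolding finite_AN_dim_def .
  then obtain n :: nat where "\<exists>c::real. c > 0 \<and> (\<forall>s::real. s > 0 \<longrightarrow>
     (\<exists>\<U>. \<Union>\<U> = realisation V K \<and>
        (\<forall>U\<in>\<U>. \<forall>x\<in>U. \<forall>y\<in>U. nat_metric V K x y \<le> ereal (c * s)) \<and>
        (\<forall>x\<in>realisation V K. finite {U\<in>\<U>. \<exists>y\<in>U. nat_metric V K x y < ereal s} \<and>
                 card {U\<in>\<U>. \<exists>y\<in>U. nat_metric V K x y < ereal s} \<le> n + 1)))" ..
  then obtain c :: real where cAN: "c > 0 \<and> (\<forall>s::real. s > 0 \<longrightarrow>
     (\<exists>\<U>. \<Union>\<U> = realisation V K \<and>
        (\<forall>U\<in>\<U>. \<forall>x\<in>U. \<forall>y\<in>U. nat_metric V K x y \<le> ereal (c * s)) \<and>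
        (\<forall>x\<in>realisation V K. finite {U\<in>\<U>. \<exists>y\<in>U. nat_metric V K x y < ereal s} \<and>
                 card {U\<in>\<U>. \<exists>y\<in>U. nat_metric V K x y < ereal s} \<le> n + 1)))" ..
  have cpos: "c > 0" using cAN by (rule conjunct1)
  note AN = conjunct2[OF cAN]
  define lam where "lam = 2 + 2 * (real D + 1) * c * sqrt 2"
  define mu where "mu = 2 * (real D + 1) * (2 * c * sqrt 2 + 1) + 2"
  define bet where "bet = ln (real D + 1)"
  define eps where "eps = 1 / (2 * lam * bet)"
  define B1 where "B1 = 2 ^ (D + 1) * (2 * exp (mu * bet) + 2 * (real n + 1) / eps)"
  define B2 where "B2 = 2 ^ (D + 1) * (2 * exp (mu * bet) / ln 2)"
  have single: "\<And>r (W::'a set) Z. finite W \<Longrightarrow> card W \<le> r \<Longrightarrow> subcomplex_le W Z V K \<Longrightarrow>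
      real (s_TO TYPE('q) W Z) \<le> B1 * (real r / ln (1 + real r)) + B2"
  proof -
    fix r :: nat and W :: "'a set" and Z :: "'a set set"
    assume finW: "finite W" and cW: "card W \<le> r" and sub: "subcomplex_le W Z V K"
    have ascZ: "abs_simplicial_complex W Z" using sub unfolding subcomplex_le_def by blast
    obtain \<phi> where inj: "inj_on \<phi> W" and phiV: "\<phi> ` W \<subseteq> V" and phiK: "\<forall>\<sigma>\<in>Z. \<phi> ` \<sigma> \<in> K"
      using sub unfolding subcomplex_le_def by blast
    define T where "T = nat \<lfloor>eps * ln (1 + real r)\<rfloor>"
    define E where "E = 2 * T + nat \<lceil>2 * (real D + 1) * (c * (sqrt 2 * (real T + 2)) + 1) + 1\<rceil>"
    obtain \<kappa> :: "'a \<Rightarrow> nat" where piece: "\<forall>k. card {w\<in>W. \<kappa> w = k} \<le> (D + 1) ^ E"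
      and bd: "(T + 1) * card {a\<in>W. \<exists>b\<in>W. {a, b} \<in> Z \<and> \<kappa> a \<noteq> \<kappa> b} \<le> 2 * (n + 1) * card W"
      using partition_exists[OF asc deg cpos AN finW inj phiV phiK, of T] unfolding E_def by blast
    define nb where "nb = card {a\<in>W. \<exists>b\<in>W. {a, b} \<in> Z \<and> \<kappa> a \<noteq> \<kappa> b}"
    have "s_TO TYPE('q) W Z \<le> 2 ^ (D + 1) * ((D + 1) ^ E + nb)"
      unfolding nb_def by (rule overlap_generic[OF finW ascZ inj phiV phiK deg]) (use piece in blast)
    then have "real (s_TO TYPE('q) W Z) \<le> real (2 ^ (D + 1) * ((D + 1) ^ E + nb))"
      by (simp only: of_nat_le_iff)
    then have s1: "real (s_TO TYPE('q) W Z) \<le> 2 ^ (D + 1) * (real ((D + 1) ^ E) + real nb)"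
      by simp
    have "real (T + 1) * real nb \<le> 2 * (real n + 1) * real r"
    proof -
      have "(T + 1) * nb \<le> 2 * (n + 1) * r" using bd cW unfolding nb_def
        by (meson le_trans mult_le_mono2)
      then have "real ((T + 1) * nb) \<le> real (2 * (n + 1) * r)" by (simp only: of_nat_le_iff)
      then show ?thesis by (simp add: algebra_simps)
    qed
    then have s2: "real nb \<le> 2 * (real n + 1) * real r / (real T + 1)"
    proof -
      assume h: "real (T + 1) * real nb \<le> 2 * (real n + 1) * real r"
      have pos: "real T + 1 > 0" by simp
      have "real nb * (real T + 1) \<le> 2 * (real n + 1) * real r" proof -
        have e: "real (T + 1) * real nb = real nb * (real T + 1)" by (simp add: algebra_simps)
        show ?thesis using h e by linarith
      qed
      then show ?thesis by (subst pos_le_divide_eq[OF pos])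
    qed
    have "real (s_TO TYPE('q) W Z) \<le> 2 ^ (D + 1) * (real ((D + 1) ^ E) + 2 * (real n + 1) * real r / (real T + 1))"
    proof -
      have "2 ^ (D + 1) * (real ((D + 1) ^ E) + real nb) \<le> 2 ^ (D + 1) * (real ((D + 1) ^ E) + 2 * (real n + 1) * real r / (real T + 1))"
        using s2 by (intro mult_left_mono) simp_all
      then show ?thesis using s1 by linarith
    qed
    also have "\<dots> \<le> 2 ^ (D + 1) * ((2 * exp (mu * bet) + 2 * (real n + 1) / eps) * (real r / ln (1 + real r))
           + 2 * exp (mu * bet) / ln 2)"
      using asym[OF cpos D1, where n=n and r=r] unfolding E_def T_def lam_def mu_def bet_def eps_def
      by (intro mult_left_mono) simp_all
    also have "\<dots> = B1 * (real r / ln (1 + real r)) + B2" unfolding B1_def B2_def by (simp add: algebra_simps)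
    finally show "real (s_TO TYPE('q) W Z) \<le> B1 * (real r / ln (1 + real r)) + B2" .
  qed
  have XX: "\<And>r. real (s_TO_X TYPE('q) V K r) \<le> B1 * (real r / ln (1 + real r)) + B2"
  proof -
    fix r :: nat
    define S where "S = {s_TO TYPE('q) W Z | (W::'a set) Z. finite W \<and> card W \<le> r \<and> subcomplex_le W Z V K}"
    have Sb: "\<And>x. x \<in> S \<Longrightarrow> real x \<le> B1 * (real r / ln (1 + real r)) + B2"
      unfolding S_def using single by blast
    have B2nn: "B2 \<ge> 0" unfolding B2_def by simp
    have B1nn: "B1 \<ge> 0" unfolding B1_def eps_def lam_def bet_def using cpos D1
      by (simp add: add_nonneg_nonneg mult_nonneg_nonneg)
    have rhsnn: "B1 * (real r / ln (1 + real r)) + B2 \<ge> 0" using B1nn B2nn by simp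
    show "real (s_TO_X TYPE('q) V K r) \<le> B1 * (real r / ln (1 + real r)) + B2"
    proof (cases "S = {}")
      case True
      then show ?thesis unfolding s_TO_X_def S_def[symmetric] using rhsnn by simp
    next
      case False
      have "S \<subseteq> {..nat \<lceil>B1 * (real r / ln (1 + real r)) + B2\<rceil>}"
      proof
        fix x assume "x \<in> S"
        then have "real x \<le> B1 * (real r / ln (1 + real r)) + B2" by (rule Sb)
        then show "x \<in> {..nat \<lceil>B1 * (real r / ln (1 + real r)) + B2\<rceil>}" by simp linarith
      qed
      then have finS: "finite S" by (rule finite_subset) simp
      have "Sup S = Max S" using False by (simp add: Sup_nat_def)
      moreover have "Max S \<in> S" using finS False by (rule Max_in)
      ultimately have "Sup S \<in> S" by simp
      then show ?thesis unfolding s_TO_X_def S_def[symmetric] by (rule Sb)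
    qed
  qed
  define C where "C = nat \<lceil>max B1 B2\<rceil> + 1"
  have C1: "C \<ge> 1" unfolding C_def by simp
  have CB1: "B1 \<le> real C" and CB2: "B2 \<le> real C" unfolding C_def by linarith+
  have "\<forall>r::nat. real (s_TO_X TYPE('q) V K r) \<le> real C * ((real C * real r) / ln (1 + real C * real r)) + real C"
  proof
    fix r :: nat
    have Gnn: "real r / ln (1 + real r) \<ge> 0" by simp
    have "real (s_TO_X TYPE('q) V K r) \<le> B1 * (real r / ln (1 + real r)) + B2" by (rule XX)
    also have "\<dots> \<le> real C * (real r / ln (1 + real r)) + real C"
    proof -
      have "B1 * (real r / ln (1 + real r)) \<le> real C * (real r / ln (1 + real r))"
        using CB1 Gnn by (rule mult_right_mono)
      then show ?thesis using CB2 by linarith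
    qed
    also have "\<dots> \<le> real C * ((real C * real r) / ln (1 + real C * real r)) + real C"
      using G_mono[OF C1, of r] by (intro add_right_mono mult_left_mono) simp_all
    finally show "real (s_TO_X TYPE('q) V K r) \<le> real C * ((real C * real r) / ln (1 + real C * real r)) + real C" .
  qed
  then show ?thesis by blast
qed


end
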